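(* Let $H$ be a matroid that is vertically connected but not vertically $3$-connected, and let $z$ be an element of $H$ such that $H/z$ is vertically $3$-connected. If $A$ is a minimal (under inclusion) vertical $2$-separating set of $H$ containing $z$, then $A$ is a cocircuit of $H$ of rank $2$.
   Context: For $A\subseteq E(H)$, $\lambda_H(A)=r_H(A)+r_H(E(H)-A)-r(H)$. A partition $\{A,B\}$ of $E(H)$ is a vertical $k$-separation if $\lambda_H(A)\le k-1$ and $r_H(A),r_H(B)\ge k$; a vertical $2$-separating set is a set $A$ such that $\{A,E(H)-A\}$ is a vertical $2$-separation. $H$ is vertically connected if it has no vertical $1$-separation, and vertically $3$-connected if it has no vertical $1$- or $2$-separation. *)

theory Defs
  imports Main
begin

definition matroid :: "'a set \<Rightarrow> ('a set \<Rightarrow> bool) \<Rightarrow> bool" where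
  "matroid E indep \<longleftrightarrow>
     finite E \<and> indep {} \<and>
     (\<forall>I. indep I \<longrightarrow> I \<subseteq> E) \<and>
     (\<forall>I J. indep I \<and> J \<subseteq> I \<longrightarrow> indep J) \<and>
     (\<forall>I J. indep I \<and> indep J \<and> card I < card J \<longrightarrow>
        (\<exists>x \<in> J - I. indep (insert x I)))"

definition rk :: "('a set \<Rightarrow> bool) \<Rightarrow> 'a set \<Rightarrow> nat" where
  "rk indep X = Max {card I | I. I \<subseteq> X \<and> indep I}"

definition contract_indep :: "'a set \<Rightarrow> ('a set \<Rightarrow> bool) \<Rightarrow> 'a \<Rightarrow> 'a set \<Rightarrow> bool" where
  "contract_indep E indep z I \<longleftrightarrow>
     I \<subseteq> E - {z} \<and> rk indep (insert z I) = card I + rk indep {z}"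

definition conn :: "'a set \<Rightarrow> ('a set \<Rightarrow> bool) \<Rightarrow> 'a set \<Rightarrow> int" where
  "conn E indep A = int (rk indep A) + int (rk indep (E - A)) - int (rk indep E)"

definition vert_sep :: "'a set \<Rightarrow> ('a set \<Rightarrow> bool) \<Rightarrow> nat \<Rightarrow> 'a set \<Rightarrow> 'a set \<Rightarrow> bool" where
  "vert_sep E indep k A B \<longleftrightarrow>
     A \<union> B = E \<and> A \<inter> B = {} \<and>
     conn E indep A \<le> int k - 1 \<and> rk indep A \<ge> k \<and> rk indep B \<ge> k"

definition vert_2_separating :: "'a set \<Rightarrow> ('a set \<Rightarrow> bool) \<Rightarrow> 'a set \<Rightarrow> bool" where
  "vert_2_separating E indep A \<longleftrightarrow> A \<subseteq> E \<and> vert_sep E indep 2 A (E - A)"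

definition vert_connected :: "'a set \<Rightarrow> ('a set \<Rightarrow> bool) \<Rightarrow> bool" where
  "vert_connected E indep \<longleftrightarrow> \<not> (\<exists>A B. vert_sep E indep 1 A B)"

definition vert_3_connected :: "'a set \<Rightarrow> ('a set \<Rightarrow> bool) \<Rightarrow> bool" where
  "vert_3_connected E indep \<longleftrightarrow>
     \<not> (\<exists>A B. vert_sep E indep 1 A B) \<and> \<not> (\<exists>A B. vert_sep E indep 2 A B)"

definition basis :: "'a set \<Rightarrow> ('a set \<Rightarrow> bool) \<Rightarrow> 'a set \<Rightarrow> bool" where
  "basis E indep B \<longleftrightarrow> indep B \<and> (\<forall>I. indep I \<and> B \<subseteq> I \<longrightarrow> I = B)"

definition dual_indep :: "'a set \<Rightarrow> ('a set \<Rightarrow> bool) \<Rightarrow> 'a set \<Rightarrow> bool" where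
  "dual_indep E indep I \<longleftrightarrow> I \<subseteq> E \<and> (\<exists>B. basis E indep B \<and> I \<subseteq> E - B)"

definition circuit :: "'a set \<Rightarrow> ('a set \<Rightarrow> bool) \<Rightarrow> 'a set \<Rightarrow> bool" where
  "circuit E indep C \<longleftrightarrow> C \<subseteq> E \<and> \<not> indep C \<and> (\<forall>D. D \<subset> C \<longrightarrow> indep D)"

definition cocircuit :: "'a set \<Rightarrow> ('a set \<Rightarrow> bool) \<Rightarrow> 'a set \<Rightarrow> bool" where
  "cocircuit E indep C \<longleftrightarrow> circuit E (dual_indep E indep) C"

end

theory Submission
  imports Defs
begin

lemma rk_eqI:
  assumes "\<And>I. I \<subseteq> X \<Longrightarrow> P I \<Longrightarrow> card I \<le> m"
    and "I0 \<subseteq> X" "P I0" "card I0 = m"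
  shows "rk P X = m"
proof -
  have fin: "finite {card I | I. I \<subseteq> X \<and> P I}"
    by (rule finite_subset[of _ "{..m}"]) (auto dest: assms(1))
  show ?thesis unfolding rk_def
    by (rule Max_eqI[OF fin]) (use assms in auto)
qed

context
  fixes E :: "'a set" and indep :: "'a set \<Rightarrow> bool"
  assumes M: "matroid E indep"
begin

lemma ind_E: "indep I \<Longrightarrow> I \<subseteq> E" using M unfolding matroid_def by blast
lemma finE: "finite E" using M unfolding matroid_def by blast
lemma ind_fin: "indep I \<Longrightarrow> finite I" using ind_E finE finite_subset by blast
lemma ind_empty: "indep {}" using M unfolding matroid_def by blast
lemma ind_mono: "indep I \<Longrightarrow> J \<subseteq> I \<Longrightarrow> indep J" using M unfolding matroid_def by blast
lemma augment: "indep I \<Longrightarrow> indep J \<Longrightarrow> card I < card J \<Longrightarrow> \<exists>x \<in> J - I. indep (insert x I)"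
  using M unfolding matroid_def by blast

lemma rk_fin: "finite {card I | I. I \<subseteq> X \<and> indep I}"
proof (rule finite_subset[of _ "{..card E}"])
  show "{card I | I. I \<subseteq> X \<and> indep I} \<subseteq> {..card E}"
    using ind_E finE by (auto intro: card_mono)
qed auto

lemma rk_ge: "indep I \<Longrightarrow> I \<subseteq> X \<Longrightarrow> card I \<le> rk indep X"
  unfolding rk_def by (rule Max_ge[OF rk_fin]) auto

lemma rk_obtain: "\<exists>I. I \<subseteq> X \<and> indep I \<and> card I = rk indep X"
proof -
  have "rk indep X \<in> {card I | I. I \<subseteq> X \<and> indep I}"
    unfolding rk_def by (rule Max_in[OF rk_fin]) (use ind_empty in auto)
  then show ?thesis by auto
qed

lemma extend: "indep I \<Longrightarrow> I \<subseteq> X \<Longrightarrow> \<exists>J. I \<subseteq> J \<and> J \<subseteq> X \<and> indep J \<and> card J = rk indep X"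
proof (induction "rk indep X - card I" arbitrary: I rule: less_induct)
  case less
  show ?case
  proof (cases "card I < rk indep X")
    case False
    then have "card I = rk indep X" using rk_ge[OF less.prems] by linarith
    then show ?thesis using less.prems by blast
  next
    case True
    obtain K where K: "K \<subseteq> X" "indep K" "card K = rk indep X" using rk_obtain by blast
    have lt0: "card I < card K" using True K(3) by simp
    from augment[OF less.prems(1) K(2) lt0] obtain x where x: "x \<in> K - I" "indep (insert x I)" by blast
    have "card (insert x I) = card I + 1" using x ind_fin[OF less.prems(1)] by simp
    then have lt: "rk indep X - card (insert x I) < rk indep X - card I" using True by linarith
    have sub: "insert x I \<subseteq> X" using x K less.prems by blast
    from less.hyps[OF lt x(2) sub] obtain J where "insert x I \<subseteq> J" "J \<subseteq> X" "indep J" "card J = rk indep X"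
      by blast
    then show ?thesis by blast
  qed
qed

lemma rk_mono: "X \<subseteq> Y \<Longrightarrow> rk indep X \<le> rk indep Y"
proof -
  assume XY: "X \<subseteq> Y"
  obtain I where I: "I \<subseteq> X" "indep I" "card I = rk indep X" using rk_obtain by blast
  have "card I \<le> rk indep Y" using rk_ge[OF I(2)] I(1) XY by blast
  then show ?thesis using I(3) by simp
qed

lemma rk_submod: "rk indep (X \<union> Y) + rk indep (X \<inter> Y) \<le> rk indep X + rk indep Y"
proof -
  obtain I where I: "I \<subseteq> X \<inter> Y" "indep I" "card I = rk indep (X \<inter> Y)" using rk_obtain by blast
  have IXY: "I \<subseteq> X \<union> Y" using I(1) by blast
  obtain J where J: "I \<subseteq> J" "J \<subseteq> X \<union> Y" "indep J" "card J = rk indep (X \<union> Y)"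
    using extend[OF I(2) IXY] by blast
  have fJ: "finite J" using ind_fin J by blast
  have iX: "indep (J \<inter> X)" by (rule ind_mono[OF J(3)]) blast
  have iY: "indep (J \<inter> Y)" by (rule ind_mono[OF J(3)]) blast
  have a: "card (J \<inter> X) \<le> rk indep X" by (rule rk_ge[OF iX]) blast
  have b: "card (J \<inter> Y) \<le> rk indep Y" by (rule rk_ge[OF iY]) blast
  have c: "card (J \<inter> X) + card (J \<inter> Y) = card (J \<inter> X \<union> J \<inter> Y) + card (J \<inter> X \<inter> (J \<inter> Y))"
    by (rule card_Un_Int) (simp_all add: fJ)
  have d: "J \<inter> X \<union> J \<inter> Y = J" using J by blast
  have IJ: "I \<subseteq> J \<inter> X \<inter> (J \<inter> Y)" using I(1) J(1) by blast
  have e: "card I \<le> card (J \<inter> X \<inter> (J \<inter> Y))" by (rule card_mono[OF _ IJ]) (simp add: fJ)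
  have "card (J \<inter> X) + card (J \<inter> Y) = card J + card (J \<inter> X \<inter> (J \<inter> Y))" using c d by simp
  then show ?thesis using a b e I(3) J(4) by linarith
qed

lemma rk_le_card: "finite X \<Longrightarrow> rk indep X \<le> card X"
proof -
  assume f: "finite X"
  obtain I where I: "I \<subseteq> X" "indep I" "card I = rk indep X" using rk_obtain by blast
  show ?thesis using card_mono[OF f I(1)] I(3) by simp
qed

lemma rk_empty: "rk indep {} = 0" using rk_le_card[of "{}"] by simp

lemma rk_insert_le: "rk indep (insert e X) \<le> rk indep X + 1"
proof -
  have "rk indep (X \<union> {e}) + rk indep (X \<inter> {e}) \<le> rk indep X + rk indep {e}" by (rule rk_submod)
  moreover have "rk indep {e} \<le> 1" using rk_le_card[of "{e}"] by simp
  ultimately show ?thesis by simp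
qed

lemma rk_single_indep: "indep {z} \<Longrightarrow> rk indep {z} = 1"
  using rk_le_card[of "{z}"] rk_ge[of "{z}" "{z}"] by simp

lemma rk_loop: "\<not> indep {z} \<Longrightarrow> rk indep (insert z X) = rk indep X"
proof -
  assume nz: "\<not> indep {z}"
  obtain I where I: "I \<subseteq> insert z X" "indep I" "card I = rk indep (insert z X)" using rk_obtain by blast
  have "z \<notin> I" using ind_mono[OF I(2), of "{z}"] nz by blast
  then have "I \<subseteq> X" using I by blast
  then have "rk indep (insert z X) \<le> rk indep X" using rk_ge I by metis
  moreover have "rk indep X \<le> rk indep (insert z X)" by (rule rk_mono) blast
  ultimately show ?thesis by simp
qed

lemma rk_single_loop: "\<not> indep {z} \<Longrightarrow> rk indep {z} = 0"
  using rk_loop[of z "{}"] rk_empty by simp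

lemma rk_contract:
  assumes "X \<subseteq> E - {z}"
  shows "rk (contract_indep E indep z) X + rk indep {z} = rk indep (insert z X)"
proof -
  have ub: "card I \<le> rk indep (insert z X) - rk indep {z}"
    if "I \<subseteq> X" "contract_indep E indep z I" for I
  proof -
    have "rk indep (insert z I) = card I + rk indep {z}" using that unfolding contract_indep_def by blast
    moreover have "rk indep (insert z I) \<le> rk indep (insert z X)" using that(1) by (intro rk_mono) blast
    ultimately show ?thesis by linarith
  qed
  have "\<exists>I. I \<subseteq> X \<and> contract_indep E indep z I \<and> card I + rk indep {z} = rk indep (insert z X)"
  proof (cases "indep {z}")
    case True
    obtain J where J: "{z} \<subseteq> J" "J \<subseteq> insert z X" "indep J" "card J = rk indep (insert z X)"
      using extend[OF True, of "insert z X"] by blast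
    define I where "I = J - {z}"
    have fJ: "finite J" using ind_fin J by blast
    have IJ: "insert z I = J" using J I_def by blast
    have zJ: "z \<in> J" using J(1) by blast
    have gJ: "card J > 0" using fJ zJ card_gt_0_iff by blast
    have "card I = card J - 1" unfolding I_def using fJ zJ by (simp add: card_Diff_singleton)
    then have cJ: "card J = card I + 1" using gJ by simp
    have rJ: "rk indep J = card J" using rk_le_card[OF fJ] rk_ge[OF J(3)] by (meson order_refl le_antisym)
    have "I \<subseteq> X" using J I_def by blast
    moreover have "I \<subseteq> E - {z}" using ind_E[OF J(3)] I_def by blast
    ultimately show ?thesis using IJ cJ rJ rk_single_indep[OF True] J
      unfolding contract_indep_def by (intro exI[of _ I]) auto
  next
    case False
    obtain I where I: "I \<subseteq> X" "indep I" "card I = rk indep X" using rk_obtain by blast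
    have rI: "rk indep I = card I" using rk_le_card[OF ind_fin[OF I(2)]] rk_ge[OF I(2)] by (meson order_refl le_antisym)
    show ?thesis using I rI rk_loop[OF False] rk_single_loop[OF False] assms
      unfolding contract_indep_def by (intro exI[of _ I]) auto
  qed
  then obtain I where I: "I \<subseteq> X" "contract_indep E indep z I" "card I + rk indep {z} = rk indep (insert z X)"
    by blast
  have "rk (contract_indep E indep z) X = rk indep (insert z X) - rk indep {z}"
    by (rule rk_eqI[where P="contract_indep E indep z" and X=X and ?I0.0=I, OF ub I(1) I(2)]) (use I(3) in auto)
  then show ?thesis using I(3) by linarith
qed

lemma basis_card: "basis E indep Bs \<Longrightarrow> rk indep E \<le> card Bs"
proof (rule ccontr)
  assume b: "basis E indep Bs" and n: "\<not> rk indep E \<le> card Bs"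
  obtain K where K: "K \<subseteq> E" "indep K" "card K = rk indep E" using rk_obtain by blast
  have iB: "indep Bs" using b unfolding basis_def by blast
  obtain x where x: "x \<in> K - Bs" "indep (insert x Bs)" using augment[OF iB K(2)] n K by auto
  then have "insert x Bs = Bs" using b unfolding basis_def by blast
  then show False using x by blast
qed

lemma basisI: "indep J \<Longrightarrow> card J = rk indep E \<Longrightarrow> basis E indep J"
  unfolding basis_def
proof (intro conjI allI impI)
  fix I assume a: "indep J" "card J = rk indep E" "indep I \<and> J \<subseteq> I"
  have "card I \<le> card J" using rk_ge[of I E] ind_E a by simp
  then show "I = J" using a ind_fin card_subset_eq by (metis card_seteq)
qed

end

theorem lemma3p3:
  fixes E :: "'a set" and indep :: "'a set \<Rightarrow> bool" and z :: 'a and A :: "'a set"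
  assumes "matroid E indep"
    and "vert_connected E indep"
    and "\<not> vert_3_connected E indep"
    and "z \<in> E"
    and "vert_3_connected (E - {z}) (contract_indep E indep z)"
    and "vert_2_separating E indep A" and "z \<in> A"
    and "\<forall>A'. A' \<subset> A \<and> z \<in> A' \<longrightarrow> \<not> vert_2_separating E indep A'"
  shows "cocircuit E indep A \<and> rk indep A = 2"
proof -
  note M = assms(1)
  define B where "B = E - A"
  define a where "a = rk indep A"
  define b where "b = rk indep B"
  define e where "e = rk indep E"
  define s where "s = rk indep {z}"
  define c where "c = rk indep (insert z B)"
  define C where "C = contract_indep E indep z"
  have AE: "A \<subseteq> E" using assms(6) unfolding vert_2_separating_def by blast
  have sep: "vert_sep E indep 2 A B" using assms(6) unfolding vert_2_separating_def B_def by blast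
  have AB: "A \<union> B = E" "A \<inter> B = {}" using AE unfolding B_def by blast+
  have c1: "conn E indep A \<le> 1" "2 \<le> a" "2 \<le> b"
    using sep unfolding vert_sep_def a_def b_def by simp_all
  have cA: "conn E indep A = int a + int b - int e" unfolding conn_def a_def b_def e_def B_def ..
  have sub1: "e \<le> a + b"
    using rk_submod[OF M, of A B] unfolding AB rk_empty[OF M] a_def b_def e_def by simp
  have "\<not> vert_sep E indep 1 A B" using assms(2) unfolding vert_connected_def by blast
  then have "\<not> (conn E indep A \<le> 0)" using AB c1 unfolding vert_sep_def a_def b_def by simp
  then have h2: "a + b = e + 1" using c1 cA sub1 by linarith
  have s1: "s \<le> 1" using rk_le_card[OF M, of "{z}"] unfolding s_def by simp
  have bc1: "b \<le> c" unfolding b_def c_def by (rule rk_mono[OF M]) blast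
  have bc2: "c \<le> b + 1" unfolding b_def c_def by (rule rk_insert_le[OF M])
  have s0: "c = b" if "s = 0"
  proof -
    have "\<not> indep {z}" using rk_single_indep[OF M, of z] that unfolding s_def by auto
    then show ?thesis using rk_loop[OF M, of z B] unfolding c_def b_def by simp
  qed
  have zB: "A \<union> insert z B = E" "A \<inter> insert z B = {z}" using AE assms(7) unfolding B_def by blast+
  have sub2: "e + s \<le> a + c" using rk_submod[OF M, of A "insert z B"] unfolding zB a_def c_def e_def s_def by simp
  have BE: "B \<subseteq> E - {z}" "A - {z} \<subseteq> E - {z}" "E - {z} \<subseteq> E - {z}" using assms(7) AE unfolding B_def by blast+
  have iA: "insert z (A - {z}) = A" using assms(7) by blast
  have iE: "insert z (E - {z}) = E" using assms(4) by blast
  define ra where "ra = rk C (A - {z})"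
  define rb where "rb = rk C B"
  define re where "re = rk C (E - {z})"
  have ra: "ra + s = a" using rk_contract[OF M BE(2)] unfolding iA C_def s_def a_def ra_def .
  have rb: "rb + s = c" using rk_contract[OF M BE(1)] unfolding C_def s_def c_def rb_def .
  have re: "re + s = e" using rk_contract[OF M BE(3)] unfolding iE C_def s_def e_def re_def .
  have part: "(A - {z}) \<union> B = E - {z}" "(A - {z}) \<inter> B = {}" "E - {z} - (A - {z}) = B"
    using AE assms(7) unfolding B_def by blast+
  have cC: "conn (E - {z}) C (A - {z}) = int ra + int rb - int re"
    unfolding conn_def part(3) ra_def rb_def re_def ..
  have n3: "\<not> vert_sep (E - {z}) C 1 (A - {z}) B" "\<not> vert_sep (E - {z}) C 2 (A - {z}) B"
    using assms(5) unfolding vert_3_connected_def C_def by blast+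
  have n31: "\<not> (int ra + int rb - int re \<le> 0 \<and> 1 \<le> ra \<and> 1 \<le> rb)"
    using n3(1) part unfolding vert_sep_def cC ra_def rb_def by simp
  have n32: "\<not> (int ra + int rb - int re \<le> 1 \<and> 2 \<le> ra \<and> 2 \<le> rb)"
    using n3(2) part unfolding vert_sep_def cC ra_def rb_def by simp
  have sS: "s = 1"
  proof (rule ccontr)
    assume "s \<noteq> 1"
    then have "s = 0" using s1 by simp
    then show False using n32 ra rb re s0 h2 c1 by simp
  qed
  have cS: "c = b + 1"
  proof (rule ccontr)
    assume "c \<noteq> b + 1"
    then have "c = b" using bc1 bc2 by simp
    then show False using n31 ra rb re sS h2 c1 by simp
  qed
  have aS: "a = 2"
  proof (rule ccontr)
    assume "a \<noteq> 2"
    then have "3 \<le> a" using c1 by simp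
    then show False using n32 ra rb re sS cS h2 c1 by simp
  qed
  have be: "b + 1 = e" using aS h2 by simp
  have hyp: "rk indep (insert x B) = e" if x: "x \<in> A" for x
  proof (cases "x = z")
    case True then show ?thesis using cS be unfolding c_def by simp
  next
    case False
    have xb1: "b \<le> rk indep (insert x B)" unfolding b_def by (rule rk_mono[OF M]) blast
    have xb2: "rk indep (insert x B) \<le> b + 1" unfolding b_def by (rule rk_insert_le[OF M])
    show ?thesis
    proof (rule ccontr)
      assume "rk indep (insert x B) \<noteq> e"
      then have xb': "rk indep (insert x B) = b" using xb1 xb2 be by simp
      define A' where "A' = A - {x}"
      have xE: "x \<in> E" using x AE by blast
      have EA': "E - A' = insert x B" using x xE unfolding A'_def B_def by blast
      have pA: "A' \<union> insert x B = E" "A' \<inter> insert x B = {}" using x AE unfolding A'_def B_def by blast+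
      have cA': "conn E indep A' = int (rk indep A') + int b - int e"
        unfolding conn_def EA' xb' e_def ..
      have r1: "rk indep A' \<le> a" unfolding a_def A'_def by (rule rk_mono[OF M]) blast
      have zA': "{z} \<subseteq> A'" using False assms(7) unfolding A'_def by blast
      have r2: "s \<le> rk indep A'" unfolding s_def by (rule rk_mono[OF M zA'])
      have "\<not> vert_sep E indep 1 A' (insert x B)" using assms(2) unfolding vert_connected_def by blast
      then have "\<not> (conn E indep A' \<le> 0 \<and> 1 \<le> rk indep A' \<and> 1 \<le> b)"
        using pA xb' unfolding vert_sep_def by simp
      then have r3: "rk indep A' \<noteq> 1" using cA' be c1 by auto
      have r4: "2 \<le> rk indep A'" using r2 r3 sS by simp
      have "vert_sep E indep 2 A' (E - A')"
        unfolding vert_sep_def EA' using pA xb' cA' be r1 r4 aS c1 by simp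
      then have "vert_2_separating E indep A'"
        unfolding vert_2_separating_def using AE unfolding A'_def by blast
      moreover have "A' \<subset> A \<and> z \<in> A'" using x False assms(7) unfolding A'_def by blast
      ultimately show False using assms(8) by blast
    qed
  qed
  have cc: "cocircuit E indep A"
    unfolding cocircuit_def circuit_def
  proof (intro conjI allI impI)
    show "A \<subseteq> E" by (rule AE)
    show "\<not> dual_indep E indep A"
    proof
      assume "dual_indep E indep A"
      then obtain Bs where Bs: "basis E indep Bs" "A \<subseteq> E - Bs" unfolding dual_indep_def by blast
      have iB: "indep Bs" using Bs unfolding basis_def by blast
      have "Bs \<subseteq> B" using ind_E[OF M iB] Bs unfolding B_def by blast
      then have "card Bs \<le> b" using rk_ge[OF M iB] unfolding b_def by blast
      then show False using basis_card[OF M Bs(1)] be unfolding e_def by linarith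
    qed
    fix D assume D: "D \<subset> A"
    then obtain x where x: "x \<in> A" "x \<notin> D" by blast
    obtain J where J: "J \<subseteq> insert x B" "indep J" "card J = rk indep (insert x B)" using rk_obtain[OF M] by blast
    have "card J = rk indep E" using J(3) hyp[OF x(1)] unfolding e_def by simp
    then have "basis E indep J" using basisI[OF M J(2)] by simp
    moreover have "D \<subseteq> E - J" using D AE J(1) x unfolding B_def by blast
    moreover have "D \<subseteq> E" using D AE by blast
    ultimately show "dual_indep E indep D" unfolding dual_indep_def by blast
  qed
  show ?thesis using cc aS unfolding a_def by simp
qed

end
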